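(* If $K\subseteq\beta\mathbb{T}$ is a nonempty compact set closed under $\hat{}$ which is minimal among nonempty compact subsets of $\beta\mathbb{T}$ closed under $\hat{}$, then $K$ is not separable.
   Context: For $a,b\subseteq(0,1]$ put $a\,\hat{}\,b=\tfrac12 a\cup\tfrac12(b+1)$; $\mathbb{T}$ is the set generated from $\mathbf{1}=\{1\}$ by $\hat{}$ (the free binary system on one generator). $\beta\mathbb{T}$ is the Čech–Stone compactification of the discrete set $\mathbb{T}$ (the space of ultrafilters on $\mathbb{T}$ with its usual compact topology), and $\hat{}$ is extended to $\beta\mathbb{T}$ by: $W\in\mathcal{U}\,\hat{}\,\mathcal{V}$ iff $\{u\in\mathbb{T}:\{v\in\mathbb{T}:u\,\hat{}\,v\in W\}\in\mathcal{V}\}\in\mathcal{U}$. A subset $K$ is closed under $\hat{}$ if $\xi\,\hat{}\,\eta\in K$ whenever $\xi,\eta\in K$. *)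

theory Defs
  imports "HOL-Analysis.Analysis"
begin

definition hat :: "real set \<Rightarrow> real set \<Rightarrow> real set" where
  "hat a b = (\<lambda>x. x / 2) ` a \<union> (\<lambda>x. (x + 1) / 2) ` b"

text \<open>The free binary system generated from {1} by hat.\<close>
inductive_set TT :: "real set set" where
  one: "{1} \<in> TT"
| hat: "a \<in> TT \<Longrightarrow> b \<in> TT \<Longrightarrow> hat a b \<in> TT"

definition ultrafilter_on :: "'a set \<Rightarrow> 'a set set \<Rightarrow> bool" where
  "ultrafilter_on X U \<longleftrightarrow>
     U \<subseteq> Pow X \<and> X \<in> U \<and> {} \<notin> U \<and>
     (\<forall>A B. A \<in> U \<and> A \<subseteq> B \<and> B \<subseteq> X \<longrightarrow> B \<in> U) \<and>
     (\<forall>A B. A \<in> U \<and> B \<in> U \<longrightarrow> A \<inter> B \<in> U) \<and>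
     (\<forall>A. A \<subseteq> X \<longrightarrow> A \<in> U \<or> X - A \<in> U)"

text \<open>The Cech-Stone compactification beta TT as a set of ultrafilters.\<close>
definition betaT :: "real set set set set" where
  "betaT = {U. ultrafilter_on TT U}"

definition betaT_top :: "real set set set topology" where
  "betaT_top = topology_generated_by {{U \<in> betaT. A \<in> U} | A. A \<subseteq> TT}"

text \<open>Extension of hat to beta TT.\<close>
definition hatU :: "real set set set \<Rightarrow> real set set set \<Rightarrow> real set set set" where
  "hatU U V = {W. W \<subseteq> TT \<and> {u \<in> TT. {v \<in> TT. hat u v \<in> W} \<in> V} \<in> U}"

definition closed_hat :: "real set set set set \<Rightarrow> bool" where
  "closed_hat K \<longleftrightarrow> (\<forall>\<xi>\<in>K. \<forall>\<eta>\<in>K. hatU \<xi> \<eta> \<in> K)"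

end

theory Submission
  imports Defs "HOL-Library.Countable"
begin

lemma TT_sub: "t \<in> TT \<Longrightarrow> t \<noteq> {} \<and> t \<subseteq> {0<..1}"
proof (induction rule: TT.induct)
  case one then show ?case by auto
next
  case (hat a b) 
  have "a \<noteq> {}" using hat by auto
  moreover have "(\<lambda>x. x / 2) ` a \<subseteq> {0<..1}" using hat.IH(1) by (auto simp: subset_eq)
  moreover have "(\<lambda>x. (x+1) / 2) ` b \<subseteq> {0<..1}" using hat.IH(2) by (auto simp: subset_eq)
  ultimately show ?case unfolding hat_def by blast
qed

lemma hat_memD: "z \<in> hat u v \<Longrightarrow> (\<exists>y\<in>u. z = y/2) \<or> (\<exists>y\<in>v. z = (y+1)/2)"
  unfolding hat_def by auto

lemma hat_inj:
  assumes "u \<subseteq> {0<..1}" "v \<subseteq> {0<..1}" "u' \<subseteq> {0<..1}" "v' \<subseteq> {0<..1}"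
    and "hat u v = hat u' v'"
  shows "u = u' \<and> v = v'"
proof -
  have L: "x \<in> p' " if "x \<in> p" "hat p q = hat p' q'" "p \<subseteq> {0<..1}" "q' \<subseteq> {0<..1}" for x p q p' q'
  proof -
    have "x/2 \<in> hat p' q'" using that unfolding hat_def by auto
    then consider (a) y where "y \<in> p'" "x/2 = y/2" | (b) y where "y \<in> q'" "x/2 = (y+1)/2"
      using hat_memD by blast
    then show ?thesis
    proof cases
      case a then show ?thesis by simp
    next
      case b
      then have "x = y + 1" by simp
      moreover have "y > 0" "x \<le> 1" using b that by auto
      ultimately show ?thesis by simp
    qed
  qed
  have R: "x \<in> q' " if "x \<in> q" "hat p q = hat p' q'" "q \<subseteq> {0<..1}" "p' \<subseteq> {0<..1}" for x p q p' q'
  proof -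
    have "(x+1)/2 \<in> hat p' q'" using that unfolding hat_def by auto
    then consider (a) y where "y \<in> p'" "(x+1)/2 = y/2" | (b) y where "y \<in> q'" "(x+1)/2 = (y+1)/2"
      using hat_memD by blast
    then show ?thesis
    proof cases
      case b then show ?thesis by simp
    next
      case a
      then have "y = x + 1" by simp
      moreover have "x > 0" "y \<le> 1" using a that by auto
      ultimately show ?thesis by simp
    qed
  qed
  have "u = u'" using L[where p=u and q=v and p'=u' and q'=v'] L[where p=u' and q=v' and p'=u and q'=v] assms by blast
  moreover have "v = v'" using R[where p=u and q=v and p'=u' and q'=v'] R[where p=u' and q=v' and p'=u and q'=v] assms by blast
  ultimately show ?thesis by simp
qed

lemma hat_inj_TT:
  "u \<in> TT \<Longrightarrow> v \<in> TT \<Longrightarrow> u' \<in> TT \<Longrightarrow> v' \<in> TT \<Longrightarrow> hat u v = hat u' v' \<Longrightarrow> u = u' \<and> v = v'"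
  using hat_inj[of u v u' v'] TT_sub[of u] TT_sub[of v] TT_sub[of u'] TT_sub[of v'] by blast

lemma hat_ne_one: "u \<in> TT \<Longrightarrow> hat u v \<noteq> {1}"
proof
  assume "u \<in> TT" "hat u v = {1}"
  then obtain x where "x \<in> u" using TT_sub by blast
  then have "x \<le> 1" "x > 0" using TT_sub[of u] \<open>u \<in> TT\<close> by auto
  have "x/2 \<in> hat u v" using \<open>x \<in> u\<close> unfolding hat_def by blast
  then show False using \<open>hat u v = {1}\<close> \<open>x > 0\<close> \<open>x \<le> 1\<close> by auto
qed


section \<open>Ultrafilter basics\<close>

lemma uf_unfold: "\<xi> \<in> betaT \<longleftrightarrow> ultrafilter_on TT \<xi>"
  by (simp add: betaT_def)

lemma uf_sub: "\<xi> \<in> betaT \<Longrightarrow> A \<in> \<xi> \<Longrightarrow> A \<subseteq> TT"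
  by (auto simp: betaT_def ultrafilter_on_def)
lemma uf_TT: "\<xi> \<in> betaT \<Longrightarrow> TT \<in> \<xi>"
  by (auto simp: betaT_def ultrafilter_on_def)
lemma uf_empty: "\<xi> \<in> betaT \<Longrightarrow> {} \<notin> \<xi>"
  by (auto simp: betaT_def ultrafilter_on_def)
lemma uf_mono: "\<xi> \<in> betaT \<Longrightarrow> A \<in> \<xi> \<Longrightarrow> A \<subseteq> B \<Longrightarrow> B \<subseteq> TT \<Longrightarrow> B \<in> \<xi>"
  unfolding betaT_def ultrafilter_on_def by blast
lemma uf_Int: "\<xi> \<in> betaT \<Longrightarrow> A \<in> \<xi> \<Longrightarrow> B \<in> \<xi> \<Longrightarrow> A \<inter> B \<in> \<xi>"
  unfolding betaT_def ultrafilter_on_def by blast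
lemma uf_compl: "\<xi> \<in> betaT \<Longrightarrow> A \<subseteq> TT \<Longrightarrow> A \<notin> \<xi> \<Longrightarrow> TT - A \<in> \<xi>"
  unfolding betaT_def ultrafilter_on_def by blast
lemma uf_compl2: "\<xi> \<in> betaT \<Longrightarrow> A \<in> \<xi> \<Longrightarrow> TT - A \<notin> \<xi>"
proof
  assume "\<xi> \<in> betaT" "A \<in> \<xi>" "TT - A \<in> \<xi>"
  then have "A \<inter> (TT - A) \<in> \<xi>" by (rule uf_Int)
  then show False using uf_empty \<open>\<xi> \<in> betaT\<close> by auto
qed
lemma uf_Un: "\<xi> \<in> betaT \<Longrightarrow> A \<subseteq> TT \<Longrightarrow> B \<subseteq> TT \<Longrightarrow> A \<notin> \<xi> \<Longrightarrow> B \<notin> \<xi> \<Longrightarrow> A \<union> B \<notin> \<xi>"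
proof
  assume *: "\<xi> \<in> betaT" "A \<subseteq> TT" "B \<subseteq> TT" "A \<notin> \<xi>" "B \<notin> \<xi>" "A \<union> B \<in> \<xi>"
  then have "(TT - A) \<inter> (TT - B) \<in> \<xi>" using uf_compl uf_Int by blast
  moreover have "(TT - A) \<inter> (TT - B) = TT - (A \<union> B)" by blast
  ultimately show False using uf_compl2 * by metis
qed
lemma uf_eqI: "\<xi> \<in> betaT \<Longrightarrow> \<eta> \<in> betaT \<Longrightarrow> (\<And>A. A \<subseteq> TT \<Longrightarrow> A \<in> \<xi> \<Longrightarrow> A \<in> \<eta>) \<Longrightarrow> \<xi> = \<eta>"
  by (metis subsetI subset_antisym uf_compl uf_compl2 uf_sub)
lemma uf_trivial: "\<xi> \<in> betaT \<Longrightarrow> (if P then TT else {}) \<in> \<xi> \<longleftrightarrow> P"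
  using uf_TT uf_empty by auto

lemma hatU_mem: "W \<in> hatU \<xi> \<eta> \<longleftrightarrow> W \<subseteq> TT \<and> {u \<in> TT. {v \<in> TT. hat u v \<in> W} \<in> \<eta>} \<in> \<xi>"
  by (simp add: hatU_def)

definition HR :: "real set set \<Rightarrow> real set set" where
  "HR B = {hat u v | u v. u \<in> TT \<and> v \<in> B}"
definition HL :: "real set set \<Rightarrow> real set set" where
  "HL A = {hat u v | u v. u \<in> A \<and> v \<in> TT}"
definition Rt :: "real set set set \<Rightarrow> real set set set" where
  "Rt \<xi> = {B. B \<subseteq> TT \<and> HR B \<in> \<xi>}"
definition Lt :: "real set set set \<Rightarrow> real set set set" where
  "Lt \<xi> = {A. A \<subseteq> TT \<and> HL A \<in> \<xi>}"

lemma HR_sub: "B \<subseteq> TT \<Longrightarrow> HR B \<subseteq> TT"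
  unfolding HR_def using TT.hat by blast
lemma HL_sub: "A \<subseteq> TT \<Longrightarrow> HL A \<subseteq> TT"
  unfolding HL_def using TT.hat by blast

lemma fib_HR: "u \<in> TT \<Longrightarrow> B \<subseteq> TT \<Longrightarrow> {v \<in> TT. hat u v \<in> HR B} = B"
  unfolding HR_def using hat_inj_TT by blast
lemma fib_HL: "u \<in> TT \<Longrightarrow> A \<subseteq> TT \<Longrightarrow> {v \<in> TT. hat u v \<in> HL A} = (if u \<in> A then TT else {})"
  unfolding HL_def using hat_inj_TT by (auto; blast)

lemma Rt_hatU: assumes "\<xi> \<in> betaT" "\<eta> \<in> betaT" shows "Rt (hatU \<xi> \<eta>) = \<eta>"
proof -
  have "B \<in> Rt (hatU \<xi> \<eta>) \<longleftrightarrow> B \<in> \<eta>" for B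
  proof (cases "B \<subseteq> TT")
    case True
    have "{u \<in> TT. {v \<in> TT. hat u v \<in> HR B} \<in> \<eta>} = (if B \<in> \<eta> then TT else {})"
      using fib_HR[OF _ True] by auto
    then show ?thesis using True HR_sub[OF True] uf_trivial[OF assms(1)]
      by (simp add: Rt_def hatU_mem)
  next
    case False then show ?thesis using uf_sub[OF assms(2)] by (auto simp: Rt_def)
  qed
  then show ?thesis by blast
qed

lemma Lt_hatU: assumes "\<xi> \<in> betaT" "\<eta> \<in> betaT" shows "Lt (hatU \<xi> \<eta>) = \<xi>"
proof -
  have "A \<in> Lt (hatU \<xi> \<eta>) \<longleftrightarrow> A \<in> \<xi>" for A
  proof (cases "A \<subseteq> TT")
    case True
    have "{u \<in> TT. {v \<in> TT. hat u v \<in> HL A} \<in> \<eta>} = A"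
      using fib_HL[OF _ True] uf_trivial[OF assms(2)] True by (auto simp del: if_splits) (metis subsetD)
    then show ?thesis using True HL_sub[OF True]
      by (simp add: Lt_def hatU_mem)
  next
    case False then show ?thesis using uf_sub[OF assms(1)] by (auto simp: Lt_def)
  qed
  then show ?thesis by blast
qed


section \<open>Parity of the left spine\<close>

inductive lr :: "real set \<Rightarrow> nat \<Rightarrow> bool" where
  lr0: "lr {1} 0"
| lrS: "u \<in> TT \<Longrightarrow> v \<in> TT \<Longrightarrow> lr u n \<Longrightarrow> lr (hat u v) (Suc n)"

lemma lr_ex: "t \<in> TT \<Longrightarrow> \<exists>n. lr t n"
  by (induction rule: TT.induct) (auto intro: lr.intros)

lemma lr_unique: "lr t n \<Longrightarrow> lr t m \<Longrightarrow> n = m"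
proof (induction arbitrary: m rule: lr.induct)
  case lr0
  then show ?case by (cases rule: lr.cases) (auto dest: hat_ne_one[symmetric])
next
  case (lrS u v n)
  note IH = lrS.IH and hy = lrS.hyps
  from lrS.prems show ?case
  proof (cases rule: lr.cases)
    case lr0 then show ?thesis using hat_ne_one lrS.hyps by blast
  next
    case (lrS u' v' n')
    then have "u = u'" using hat_inj_TT hy by blast
    then show ?thesis using lrS IH by auto
  qed
qed

definition Ev :: "real set set" where "Ev = {t \<in> TT. \<exists>n. even n \<and> lr t n}"

lemma Ev_hat: assumes "u \<in> TT" "v \<in> TT" shows "hat u v \<in> Ev \<longleftrightarrow> u \<notin> Ev"
proof -
  obtain n where n: "lr u n" using lr_ex assms by blast
  have hn: "lr (hat u v) (Suc n)" using n assms by (rule lrS[rotated 2])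
  have "u \<in> Ev \<longleftrightarrow> even n" using n lr_unique assms unfolding Ev_def by blast
  moreover have "hat u v \<in> Ev \<longleftrightarrow> even (Suc n)" using hn lr_unique assms TT.hat unfolding Ev_def by blast
  ultimately show ?thesis by simp
qed

lemma no_idem: assumes "\<zeta> \<in> betaT" shows "hatU \<zeta> \<zeta> \<noteq> \<zeta>"
proof
  assume eq: "hatU \<zeta> \<zeta> = \<zeta>"
  have EvT: "Ev \<subseteq> TT" by (auto simp: Ev_def)
  have "{u \<in> TT. {v \<in> TT. hat u v \<in> Ev} \<in> \<zeta>} = TT - Ev"
  proof -
    have "{v \<in> TT. hat u v \<in> Ev} = (if u \<notin> Ev then TT else {})" if "u \<in> TT" for u
      using Ev_hat that by auto
    then show ?thesis using uf_TT[OF assms] uf_empty[OF assms] by auto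
  qed
  then have "Ev \<in> hatU \<zeta> \<zeta> \<longleftrightarrow> TT - Ev \<in> \<zeta>" using EvT by (simp add: hatU_mem)
  then have "Ev \<in> \<zeta> \<longleftrightarrow> TT - Ev \<in> \<zeta>" using eq by simp
  then show False using uf_compl[OF assms EvT] uf_compl2[OF assms] by blast
qed

datatype tr = Lf | Nd tr tr

instance tr :: countable by countable_datatype

fun evt :: "tr \<Rightarrow> real set" where
  "evt Lf = {1}"
| "evt (Nd a b) = hat (evt a) (evt b)"

lemma TT_countable: "countable TT"
proof -
  have "t \<in> range evt" if "t \<in> TT" for t
    using that
  proof (induction rule: TT.induct)
    case one then show ?case by (metis evt.simps(1) rangeI)
  next
    case (hat a b)
    then obtain x y where "a = evt x" "b = evt y" by auto
    then show ?case by (metis evt.simps(2) rangeI)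
  qed
  moreover have "countable (range evt)" by simp
  ultimately show ?thesis by (meson countable_subset subsetI)
qed

definition bas :: "real set set \<Rightarrow> real set set set set" where
  "bas A = {U \<in> betaT. A \<in> U}"

lemma topspace_beta [simp]: "topspace betaT_top = betaT"
proof -
  have "\<Union>{{U \<in> betaT. A \<in> U} | A. A \<subseteq> TT} = betaT"
    using uf_TT by blast
  then show ?thesis unfolding betaT_top_def by simp
qed

lemma open_bas: "A \<subseteq> TT \<Longrightarrow> openin betaT_top (bas A)"
  unfolding betaT_top_def bas_def by (rule topology_generated_by_Basis) blast

lemma Hausdorff_beta: "Hausdorff_space betaT_top"
  unfolding Hausdorff_space_def
proof (intro allI impI)
  fix x y assume H: "x \<in> topspace betaT_top \<and> y \<in> topspace betaT_top \<and> x \<noteq> y"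
  then have xy: "x \<in> betaT" "y \<in> betaT" by auto
  obtain A where A: "A \<subseteq> TT" "A \<in> x" "A \<notin> y" using uf_eqI[OF xy] H by blast
  have "TT - A \<in> y" using uf_compl[OF xy(2) A(1,3)] .
  moreover have "disjnt (bas A) (bas (TT - A))"
    unfolding disjnt_def bas_def using uf_compl2 by blast
  ultimately show "\<exists>U V. openin betaT_top U \<and> openin betaT_top V \<and> x \<in> U \<and> y \<in> V \<and> disjnt U V"
    using A xy open_bas[of A] open_bas[of "TT - A"] unfolding bas_def by blast
qed

lemma cont_rho:
  assumes K: "K \<subseteq> betaT" "closed_hat K" and a: "a \<in> K"
  shows "continuous_map (subtopology betaT_top K) (subtopology betaT_top K) (\<lambda>\<xi>. hatU \<xi> a)"
proof -
  have img: "hatU \<xi> a \<in> K" if "\<xi> \<in> K" for \<xi> using K a that unfolding closed_hat_def by blast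
  have tsK: "topspace (subtopology betaT_top K) = K" using K by auto
  have "continuous_map (subtopology betaT_top K) betaT_top (\<lambda>\<xi>. hatU \<xi> a)"
  proof (rule continuous_on_generated_topo[of "{{U \<in> betaT. A \<in> U} | A. A \<subseteq> TT}", folded betaT_top_def])
    fix U assume "U \<in> {{U \<in> betaT. A \<in> U} | A. A \<subseteq> TT}"
    then obtain A where A: "A \<subseteq> TT" "U = {U \<in> betaT. A \<in> U}" by blast
    define A' where "A' = {u \<in> TT. {v \<in> TT. hat u v \<in> A} \<in> a}"
    have "\<xi> \<in> (\<lambda>\<xi>. hatU \<xi> a) -` U \<inter> K \<longleftrightarrow> \<xi> \<in> K \<inter> bas A'" for \<xi>
    proof -
      have "\<xi> \<in> (\<lambda>\<xi>. hatU \<xi> a) -` U \<inter> K \<longleftrightarrow> \<xi> \<in> K \<and> hatU \<xi> a \<in> betaT \<and> A \<in> hatU \<xi> a"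
        using A(2) by blast
      also have "\<dots> \<longleftrightarrow> \<xi> \<in> K \<and> A \<in> hatU \<xi> a"
        using img K(1) by blast
      also have "\<dots> \<longleftrightarrow> \<xi> \<in> K \<and> A' \<in> \<xi>"
        using A(1) unfolding hatU_mem A'_def by simp
      also have "\<dots> \<longleftrightarrow> \<xi> \<in> K \<inter> bas A'" using K(1) unfolding bas_def by blast
      finally show ?thesis .
    qed
    then have "(\<lambda>\<xi>. hatU \<xi> a) -` U \<inter> topspace (subtopology betaT_top K) = K \<inter> bas A'"
      unfolding tsK by blast
    moreover have "openin betaT_top (bas A')" by (rule open_bas) (auto simp: A'_def)
    ultimately show "openin (subtopology betaT_top K) ((\<lambda>\<xi>. hatU \<xi> a) -` U \<inter> topspace (subtopology betaT_top K))"
      by (metis openin_subtopology_Int2)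
  next
    have "betaT \<subseteq> \<Union> {{U \<in> betaT. A \<in> U} | A. A \<subseteq> TT}"
      using uf_TT by blast
    then show "(\<lambda>\<xi>. hatU \<xi> a) ` topspace (subtopology betaT_top K) \<subseteq> \<Union> {{U \<in> betaT. A \<in> U} | A. A \<subseteq> TT}"
      using img K unfolding tsK by blast
  qed
  then show ?thesis using img tsK by (simp add: continuous_map_in_subtopology Pi_iff)
qed


section \<open>Avoiding a countable set\<close>

fun Fs :: "real set set set set \<Rightarrow> real set set set \<Rightarrow> (nat \<Rightarrow> real set set set) \<Rightarrow> nat \<Rightarrow> (real set set set \<Rightarrow> real set set set)" where
  "Fs K z q 0 = id"
| "Fs K z q (Suc n) = Fs K z q n \<circ> (\<lambda>\<xi>. hatU \<xi> (if q n \<in> (Fs K z q n \<circ> (\<lambda>\<xi>. hatU \<xi> z)) ` K then hatU z z else z))"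

declare Fs.simps(2)[simp del]

lemma avoid:
  fixes q :: "nat \<Rightarrow> real set set set"
  assumes K: "K \<subseteq> betaT" "compactin betaT_top K" "closed_hat K" and z: "z \<in> K"
  shows "\<exists>\<eta>\<in>K. \<forall>n. \<eta> \<noteq> q n"
proof -
  define X where "X = subtopology betaT_top K"
  define a where "a n = (if q n \<in> (Fs K z q n \<circ> (\<lambda>\<xi>. hatU \<xi> z)) ` K then hatU z z else z)" for n
  have FsS: "Fs K z q (Suc n) = Fs K z q n \<circ> (\<lambda>\<xi>. hatU \<xi> (a n))" for n by (simp add: a_def Fs.simps(2))
  have zz: "hatU z z \<in> K" using K(3) z unfolding closed_hat_def by blast
  have aK: "a n \<in> K" for n using z zz unfolding a_def by auto
  have rhoK: "hatU \<xi> b \<in> K" if "\<xi> \<in> K" "b \<in> K" for \<xi> b using K(3) that unfolding closed_hat_def by blast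
  have tsX: "topspace X = K" using K(1) unfolding X_def by auto
  have maps: "Fs K z q n \<xi> \<in> K" if "\<xi> \<in> K" for n \<xi>
    using that by (induction n arbitrary: \<xi>) (auto simp: FsS rhoK aK)
  have inj_rho: "inj_on (\<lambda>\<xi>. hatU \<xi> b) K" if "b \<in> K" for b
    by (rule inj_onI) (metis Lt_hatU K(1) that subsetD)
  have inj: "inj_on (Fs K z q n) K" for n
  proof (induction n)
    case 0 then show ?case by simp
  next
    case (Suc n)
    have "inj_on (Fs K z q n) ((\<lambda>\<xi>. hatU \<xi> (a n)) ` K)"
      by (rule inj_on_subset[OF Suc]) (use rhoK aK in auto)
    then show ?case unfolding FsS by (rule comp_inj_on[OF inj_rho[OF aK]])
  qed
  have cont: "continuous_map X X (Fs K z q n)" for n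
  proof (induction n)
    case 0 then show ?case by (simp add: id_def)
  next
    case (Suc n) then show ?case
      unfolding FsS X_def using continuous_map_compose cont_rho[OF K(1) K(3) aK] by blast
  qed
  define S where "S n = Fs K z q n ` K" for n
  have cK: "compactin X K" unfolding X_def using K(2) by (simp add: compactin_subtopology)
  have HX: "Hausdorff_space X" unfolding X_def by (rule Hausdorff_space_subtopology[OF Hausdorff_beta])
  have closedS: "closedin X (S n)" for n
    unfolding S_def by (rule compactin_imp_closedin[OF HX image_compactin[OF cK cont]])
  have decS: "S (Suc n) \<subseteq> S n" for n
    unfolding S_def FsS using rhoK aK by auto
  have decS': "S m \<subseteq> S n" if "n \<le> m" for n m
    using that decS by (metis decseqD decseq_SucI le_funD)
  have Kne: "K \<noteq> {}" using z by auto
  have Sne: "S n \<noteq> {}" for n unfolding S_def using Kne by auto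
  have avoidS: "q n \<notin> S (Suc n)" for n
  proof
    assume qS: "q n \<in> S (Suc n)"
    show False
    proof (cases "q n \<in> (Fs K z q n \<circ> (\<lambda>\<xi>. hatU \<xi> z)) ` K")
      case True
      then obtain y where y: "y \<in> K" "q n = Fs K z q n (hatU y z)" by auto
      from qS True obtain x where x: "x \<in> K" "q n = Fs K z q n (hatU x (hatU z z))"
        unfolding S_def FsS a_def by auto
      have "hatU x (hatU z z) = hatU y z"
        using inj_onD[OF inj[of n]] x y rhoK zz z by metis
      then have "Rt (hatU x (hatU z z)) = Rt (hatU y z)" by simp
      then have "hatU z z = z" using Rt_hatU K(1) x y z zz by (metis subsetD)
      then show False using no_idem K(1) z by blast
    next
      case False
      then show False using qS unfolding S_def FsS a_def by auto
    qed
  qed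
  have cX: "compact_space X" unfolding compact_space_def tsX by (rule cK)
  have "\<Inter> (range S) \<noteq> {}"
  proof -
    have "\<forall>C\<in>range S. closedin X C" using closedS by auto
    moreover have "\<Inter>F \<noteq> {}" if FF: "finite F" "F \<subseteq> range S" for F
    proof -
      obtain N where N: "finite N" "F = S ` N" using finite_subset_image[OF FF] by auto
      define m where "m = Max (insert 0 N)"
      have "n \<le> m" if "n \<in> N" for n unfolding m_def by (rule Max_ge) (use N(1) that in auto)
      then have "S m \<subseteq> S n" if "n \<in> N" for n using decS'[of n m] that by simp
      then have "S m \<subseteq> \<Inter>(S ` N)" by (rule INF_greatest)
      then have "S m \<subseteq> \<Inter>F" using N(2) by simp
      moreover have "S m \<noteq> {}" by (rule Sne)
      ultimately show ?thesis by auto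
    qed
    ultimately show ?thesis using cX[unfolded compact_space_fip, rule_format, of "range S"] by blast
  qed
  then obtain \<eta> where eta: "\<forall>n. \<eta> \<in> S n" by blast
  have "\<eta> \<in> K" using eta[rule_format, of 0] by (simp add: S_def)
  moreover have "\<eta> \<noteq> q n" for n using eta avoidS by metis
  ultimately show ?thesis by blast
qed


section \<open>Nonprincipality and the fibre condition\<close>

definition HLt :: "real set \<Rightarrow> real set set" where
  "HLt t = {hat t v | v. v \<in> TT}"

definition good :: "real set set set \<Rightarrow> bool" where
  "good \<xi> \<longleftrightarrow> (\<forall>s. {s} \<notin> \<xi>) \<and> (\<forall>t\<in>TT. HLt t \<notin> \<xi>)"

lemma HLt_sub: "t \<in> TT \<Longrightarrow> HLt t \<subseteq> TT"
  unfolding HLt_def using TT.hat by blast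

lemma uf_ne: "\<xi> \<in> betaT \<Longrightarrow> A \<in> \<xi> \<Longrightarrow> \<exists>a. a \<in> A"
  using uf_empty by (metis ex_in_conv)

lemma sub_single: "U \<subseteq> {t} \<Longrightarrow> U = {} \<or> U = {t}" by blast

lemma np_uf_single: "\<xi> \<in> betaT \<Longrightarrow> \<forall>s. {s} \<notin> \<xi> \<Longrightarrow> U \<subseteq> {t} \<Longrightarrow> U \<notin> \<xi>"
  using uf_empty by (metis sub_single)

lemma good_hat:
  assumes "\<xi> \<in> betaT" "\<eta> \<in> betaT" "\<forall>s. {s} \<notin> \<xi>"
  shows "good (hatU \<xi> \<eta>)"
  unfolding good_def
proof (intro conjI allI ballI)
  fix s
  show "{s} \<notin> hatU \<xi> \<eta>"
  proof
    assume "{s} \<in> hatU \<xi> \<eta>"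
    then have U: "{u \<in> TT. {v \<in> TT. hat u v \<in> {s}} \<in> \<eta>} \<in> \<xi>" by (simp add: hatU_mem)
    then obtain u0 where "u0 \<in> {u \<in> TT. {v \<in> TT. hat u v \<in> {s}} \<in> \<eta>}" using uf_ne[OF assms(1)]
      by blast
    then have u0: "u0 \<in> TT" "{v \<in> TT. hat u0 v \<in> {s}} \<in> \<eta>" by auto
    then obtain v0 where v0: "v0 \<in> TT" "hat u0 v0 = s" using uf_ne[OF assms(2)] by blast
    have "{u \<in> TT. {v \<in> TT. hat u v \<in> {s}} \<in> \<eta>} \<subseteq> {u0}"
    proof
      fix u assume "u \<in> {u \<in> TT. {v \<in> TT. hat u v \<in> {s}} \<in> \<eta>}"
      then have u: "u \<in> TT" "{v \<in> TT. hat u v \<in> {s}} \<in> \<eta>" by auto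
      then obtain v where "v \<in> TT" "hat u v = s" using uf_ne[OF assms(2)] by blast
      then show "u \<in> {u0}" using hat_inj_TT[of u v u0 v0] u v0 u0 by auto
    qed
    then show False using np_uf_single[OF assms(1,3)] U by blast
  qed
next
  fix t assume t: "t \<in> TT"
  show "HLt t \<notin> hatU \<xi> \<eta>"
  proof
    assume "HLt t \<in> hatU \<xi> \<eta>"
    then have U: "{u \<in> TT. {v \<in> TT. hat u v \<in> HLt t} \<in> \<eta>} \<in> \<xi>" by (simp add: hatU_mem)
    have "{u \<in> TT. {v \<in> TT. hat u v \<in> HLt t} \<in> \<eta>} \<subseteq> {t}"
    proof
      fix u assume "u \<in> {u \<in> TT. {v \<in> TT. hat u v \<in> HLt t} \<in> \<eta>}"
      then have u: "u \<in> TT" "{v \<in> TT. hat u v \<in> HLt t} \<in> \<eta>" by auto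
      then obtain v where "v \<in> TT" "hat u v \<in> HLt t" using uf_ne[OF assms(2)] by blast
      then obtain v' where "v' \<in> TT" "hat u v = hat t v'" unfolding HLt_def by blast
      then show "u \<in> {t}" using hat_inj_TT[of u v t v'] u t \<open>v \<in> TT\<close> by auto
    qed
    then show False using np_uf_single[OF assms(1,3)] U by blast
  qed
qed

lemma closed_cbas: "A \<subseteq> TT \<Longrightarrow> closedin betaT_top (betaT - bas A)"
proof -
  assume "A \<subseteq> TT"
  moreover have "topspace betaT_top - (betaT - bas A) = bas A" by (auto simp: bas_def)
  ultimately show ?thesis unfolding closedin_def using open_bas by auto
qed

lemma nonprincipal_exists:
  assumes K: "K \<subseteq> betaT" "compactin betaT_top K" "closed_hat K" and z: "z \<in> K"
  shows "\<exists>\<eta>\<in>K. \<forall>s. {s} \<notin> \<eta>"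
proof -
  define x where "x = from_nat_into TT"
  have TTne: "TT \<noteq> {}" using TT.one by blast
  have rx: "range x = TT" unfolding x_def by (rule range_from_nat_into[OF TTne TT_countable])
  define q where "q n = {A. A \<subseteq> TT \<and> x n \<in> A}" for n
  obtain \<eta> where eta: "\<eta> \<in> K" "\<forall>n. \<eta> \<noteq> q n" using avoid[OF K z, of q] by (elim bexE)
  have ub: "\<eta> \<in> betaT" using eta K by blast
  have "{s} \<notin> \<eta>" for s
  proof
    assume s: "{s} \<in> \<eta>"
    then have "s \<in> TT" using uf_sub[OF ub] by blast
    then obtain n where n: "x n = s" using rx by (metis rangeE)
    have "\<eta> = q n"
    proof (intro set_eqI iffI)
      fix A assume A: "A \<in> \<eta>"
      have "A \<subseteq> TT" using uf_sub[OF ub A] .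
      moreover have "s \<in> A"
      proof (rule ccontr)
        assume "s \<notin> A"
        then have "A \<inter> {s} = {}" by blast
        then show False using uf_Int[OF ub A s] uf_empty[OF ub] by simp
      qed
      ultimately show "A \<in> q n" unfolding q_def n by blast
    next
      fix A assume "A \<in> q n"
      then have "A \<subseteq> TT" "s \<in> A" unfolding q_def n by auto
      then show "A \<in> \<eta>" using uf_mono[OF ub s] by blast
    qed
    then show False using eta by blast
  qed
  then show ?thesis using eta by blast
qed

lemma K_good:
  assumes K: "K \<subseteq> betaT" "K \<noteq> {}" "compactin betaT_top K" "closed_hat K"
    and min: "\<forall>L. L \<subseteq> K \<and> L \<noteq> {} \<and> compactin betaT_top L \<and> closed_hat L \<longrightarrow> L = K"
  shows "\<forall>\<xi>\<in>K. good \<xi>"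
proof -
  obtain z where z: "z \<in> K" using K(2) by blast
  obtain \<eta>0 where eta0: "\<eta>0 \<in> K" "\<forall>s. {s} \<notin> \<eta>0" using nonprincipal_exists[OF K(1,3,4) z] by (elim bexE)
  define L where "L = {\<xi> \<in> K. good \<xi>}"
  define F where "F = {{s} | s. s \<in> TT} \<union> {HLt t | t. t \<in> TT}"
  have FT: "A \<subseteq> TT" if "A \<in> F" for A using that HLt_sub unfolding F_def by auto
  have goodF: "good \<xi> \<longleftrightarrow> (\<forall>A\<in>F. A \<notin> \<xi>)" if u: "\<xi> \<in> betaT" for \<xi>
  proof
    assume g: "good \<xi>"
    show "\<forall>A\<in>F. A \<notin> \<xi>"
    proof
      fix A assume "A \<in> F"
      then consider s where "A = {s}" | t where "t \<in> TT" "A = HLt t" unfolding F_def by blast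
      then show "A \<notin> \<xi>" using g unfolding good_def by cases simp_all
    qed
  next
    assume g: "\<forall>A\<in>F. A \<notin> \<xi>"
    have "{s} \<notin> \<xi>" for s
    proof
      assume "{s} \<in> \<xi>"
      moreover have "s \<in> TT" using uf_sub[OF u \<open>{s} \<in> \<xi>\<close>] by simp
      then have "{s} \<in> F" unfolding F_def by blast
      ultimately show False using g by blast
    qed
    moreover have "HLt t \<notin> \<xi>" if "t \<in> TT" for t
    proof -
      have "HLt t \<in> F" unfolding F_def using that by blast
      then show ?thesis using g by blast
    qed
    ultimately show "good \<xi>" unfolding good_def by blast
  qed
  have Leq: "L = K \<inter> (\<Inter>A\<in>F. betaT - bas A)"
  proof (intro set_eqI iffI)
    fix \<xi> assume "\<xi> \<in> L"
    then have "\<xi> \<in> K" "good \<xi>" unfolding L_def by auto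
    then show "\<xi> \<in> K \<inter> (\<Inter>A\<in>F. betaT - bas A)" using goodF K(1) unfolding bas_def by auto
  next
    fix \<xi> assume "\<xi> \<in> K \<inter> (\<Inter>A\<in>F. betaT - bas A)"
    then have "\<xi> \<in> K" "\<forall>A\<in>F. \<xi> \<in> betaT - bas A" by blast+
    then have "\<xi> \<in> K" "\<forall>A\<in>F. A \<notin> \<xi>" unfolding bas_def by auto
    then show "\<xi> \<in> L" using goodF K(1) unfolding L_def by auto
  qed
  have Fne: "F \<noteq> {}" unfolding F_def using TT.one by blast
  have LsubK: "L \<subseteq> K" unfolding L_def by blast
  have c1: "closedin betaT_top K" by (rule compactin_imp_closedin[OF Hausdorff_beta K(3)])
  have c2: "closedin betaT_top (\<Inter>A\<in>F. betaT - bas A)"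
    by (rule closedin_INT[OF Fne]) (rule closed_cbas[OF FT])
  have "closedin betaT_top L" unfolding Leq by (rule closedin_Int[OF c1 c2])
  then have cL: "compactin betaT_top L" by (rule closed_compactin[OF K(3) LsubK])
  have u0: "\<eta>0 \<in> betaT" using eta0 K by blast
  have hK: "hatU \<xi> \<eta> \<in> K" if "\<xi> \<in> K" "\<eta> \<in> K" for \<xi> \<eta>
    using K(4) that unfolding closed_hat_def by blast
  have "hatU \<eta>0 \<eta>0 \<in> K" by (rule hK[OF eta0(1) eta0(1)])
  moreover have "good (hatU \<eta>0 \<eta>0)" by (rule good_hat[OF u0 u0 eta0(2)])
  ultimately have "hatU \<eta>0 \<eta>0 \<in> L" unfolding L_def by simp
  then have Lne: "L \<noteq> {}" by blast
  have chL: "closed_hat L"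
    unfolding closed_hat_def
  proof (intro ballI)
    fix \<xi> \<eta> assume "\<xi> \<in> L" "\<eta> \<in> L"
    then have a: "\<xi> \<in> K" "\<eta> \<in> K" "good \<xi>" by (auto simp: L_def)
    then have "\<forall>s. {s} \<notin> \<xi>" unfolding good_def by blast
    then have "good (hatU \<xi> \<eta>)" using good_hat[of \<xi> \<eta>] a K(1) by blast
    moreover have "hatU \<xi> \<eta> \<in> K" using hK a by blast
    ultimately show "hatU \<xi> \<eta> \<in> L" unfolding L_def by simp
  qed
  have LK: "L = K" by (rule min[rule_format, OF conjI[OF LsubK conjI[OF Lne conjI[OF cL chL]]]])
  show ?thesis
  proof
    fix \<xi> assume "\<xi> \<in> K"
    then have "\<xi> \<in> L" by (simp add: LK)
    then show "good \<xi>" by (simp add: L_def)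
  qed
qed


lemma TT_cover: "TT \<subseteq> {{1}} \<union> HR TT"
proof
  fix t assume "t \<in> TT"
  then show "t \<in> {{1}} \<union> HR TT"
    by (cases rule: TT.cases) (auto simp: HR_def)
qed

lemma Rt_compl:
  assumes d: "d \<in> betaT" "good d" and A: "A \<subseteq> TT" "A \<notin> Rt d"
  shows "TT - A \<in> Rt d"
proof -
  have one: "{{1}} \<notin> d" using d(2) unfolding good_def by blast
  have oneT: "{{1}} \<subseteq> TT" using TT.one by blast
  have HRT: "HR TT \<in> d"
  proof (rule ccontr)
    assume "HR TT \<notin> d"
    then have "{{1}} \<union> HR TT \<notin> d" using uf_Un[OF d(1) oneT HR_sub[of TT] one] by simp
    moreover have "{{1}} \<union> HR TT = TT" using TT_cover oneT HR_sub[of TT] by blast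
    ultimately show False using uf_TT[OF d(1)] by simp
  qed
  have "HR A \<notin> d" using A unfolding Rt_def by blast
  then have "TT - HR A \<in> d" using uf_compl[OF d(1) HR_sub[OF A(1)]] by blast
  then have I: "HR TT \<inter> (TT - HR A) \<in> d" using uf_Int[OF d(1) HRT] by blast
  have "HR TT \<inter> (TT - HR A) \<subseteq> HR (TT - A)"
  proof
    fix e assume e: "e \<in> HR TT \<inter> (TT - HR A)"
    then obtain u v where uv: "u \<in> TT" "v \<in> TT" "e = hat u v" unfolding HR_def by blast
    have "v \<notin> A" using e uv unfolding HR_def by blast
    then show "e \<in> HR (TT - A)" using uv unfolding HR_def by blast
  qed
  then have "HR (TT - A) \<in> d" using uf_mono[OF d(1) I] HR_sub[of "TT - A"] by blast
  then show ?thesis unfolding Rt_def by blast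
qed

theorem proposition6p5:
  assumes "K \<subseteq> betaT" and "K \<noteq> {}" and "compactin betaT_top K" and "closed_hat K"
    and "\<forall>L. L \<subseteq> K \<and> L \<noteq> {} \<and> compactin betaT_top L \<and> closed_hat L \<longrightarrow> L = K"
  shows "\<not> separable_space (subtopology betaT_top K)"
proof
  assume sep: "separable_space (subtopology betaT_top K)"
  have tsK: "topspace (subtopology betaT_top K) = K" using assms(1) by auto
  obtain C where C: "countable C" "C \<subseteq> K" "(subtopology betaT_top K) closure_of C = K"
    using sep unfolding separable_space_def tsK by blast
  have Cne: "C \<noteq> {}"
  proof
    assume "C = {}"
    then have "K = {}" using C(3) by simp
    then show False using assms(2) by simp
  qed
  define d where "d = from_nat_into C"
  have rd: "range d = C" unfolding d_def by (rule range_from_nat_into[OF Cne C(1)])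
  have dK: "d n \<in> K" for n using rd C(2) by blast
  have uK: "\<xi> \<in> betaT" if "\<xi> \<in> K" for \<xi> using that assms(1) by blast
  have gK: "good \<xi>" if "\<xi> \<in> K" for \<xi> using K_good[OF assms] that by blast
  have hK: "hatU \<xi> \<eta> \<in> K" if "\<xi> \<in> K" "\<eta> \<in> K" for \<xi> \<eta>
    using assms(4) that unfolding closed_hat_def by blast
  obtain z where z: "z \<in> K" using assms(2) by blast
  obtain \<eta> where eta: "\<eta> \<in> K" "\<forall>n. \<eta> \<noteq> Rt (d n)"
    using avoid[OF assms(1,3,4) z, of "\<lambda>n. Rt (d n)"] by (elim bexE)
  have ue: "\<eta> \<in> betaT" using uK eta(1) .
  have "\<exists>B. B \<subseteq> TT \<and> HR B \<in> d n \<and> B \<notin> \<eta>" for n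
  proof (cases "\<exists>B. B \<in> Rt (d n) \<and> B \<notin> \<eta>")
    case True
    then show ?thesis unfolding Rt_def by blast
  next
    case False
    then have sub: "Rt (d n) \<subseteq> \<eta>" by blast
    then obtain A where A: "A \<in> \<eta>" "A \<notin> Rt (d n)" using eta(2) by blast
    have AT: "A \<subseteq> TT" using uf_sub[OF ue A(1)] .
    have "TT - A \<in> Rt (d n)" by (rule Rt_compl[OF uK[OF dK] gK[OF dK] AT A(2)])
    moreover have "TT - A \<notin> \<eta>" using uf_compl2[OF ue A(1)] .
    ultimately show ?thesis unfolding Rt_def by blast
  qed
  then obtain B where B: "\<And>n. B n \<subseteq> TT" "\<And>n. HR (B n) \<in> d n" "\<And>n. B n \<notin> \<eta>" by metis
  define x where "x = from_nat_into TT"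
  have TTne: "TT \<noteq> {}" using TT.one by blast
  have rx: "range x = TT" unfolding x_def by (rule range_from_nat_into[OF TTne TT_countable])
  have xT: "x m \<in> TT" for m using rx by blast
  define W where "W m = TT - \<Union>(B ` {..m})" for m
  have WT: "W m \<subseteq> TT" for m unfolding W_def by blast
  have Weta: "W m \<in> \<eta>" for m
  proof (induction m)
    case 0
    have "W 0 = TT - B 0" unfolding W_def by simp
    then show ?case using uf_compl[OF ue B(1) B(3)] by simp
  next
    case (Suc m)
    have "W (Suc m) = W m \<inter> (TT - B (Suc m))" unfolding W_def atMost_Suc by blast
    then show ?case using uf_Int[OF ue Suc uf_compl[OF ue B(1) B(3)]] by simp
  qed
  define Ws where "Ws = {hat (x m) v | m v. v \<in> W m}"
  have WsT: "Ws \<subseteq> TT" unfolding Ws_def using xT WT TT.hat by blast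
  define \<tau> where "\<tau> = hatU z \<eta>"
  have tK: "\<tau> \<in> K" unfolding \<tau>_def by (rule hK[OF z eta(1)])
  have "{u \<in> TT. {v \<in> TT. hat u v \<in> Ws} \<in> \<eta>} = TT"
  proof (intro set_eqI iffI)
    fix u assume u: "u \<in> TT"
    then obtain m where m: "x m = u" using rx by (metis rangeE)
    have "W m \<subseteq> {v \<in> TT. hat u v \<in> Ws}" using WT m unfolding Ws_def by blast
    then have "{v \<in> TT. hat u v \<in> Ws} \<in> \<eta>" using uf_mono[OF ue Weta[of m]] by blast
    then show "u \<in> {u \<in> TT. {v \<in> TT. hat u v \<in> Ws} \<in> \<eta>}" using u by blast
  qed blast
  then have "Ws \<in> \<tau>" unfolding \<tau>_def hatU_mem using WsT uf_TT[OF uK[OF z]] by simp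
  then have tbas: "\<tau> \<in> K \<inter> bas Ws" using tK uK[OF tK] unfolding bas_def by blast
  have notin: "Ws \<notin> d n" for n
  proof
    assume Wd: "Ws \<in> d n"
    have ud: "d n \<in> betaT" using uK[OF dK] .
    define G where "G k = {hat (x m) v | m v. m < k \<and> v \<in> TT}" for k
    have GT: "G k \<subseteq> TT" for k unfolding G_def using xT TT.hat by blast
    have Gn: "G k \<notin> d n" for k
    proof (induction k)
      case 0
      have "G 0 = {}" unfolding G_def by simp
      then show ?case using uf_empty[OF ud] by simp
    next
      case (Suc k)
      have eq: "G (Suc k) = G k \<union> HLt (x k)" unfolding G_def HLt_def by (auto simp: less_Suc_eq)
      have "HLt (x k) \<notin> d n" using gK[OF dK] xT unfolding good_def by blast
      then show ?case unfolding eq by (rule uf_Un[OF ud GT HLt_sub[OF xT] Suc])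
    qed
    have "TT - G n \<in> d n" using uf_compl[OF ud GT Gn] .
    then have "Ws \<inter> HR (B n) \<inter> (TT - G n) \<in> d n" using uf_Int[OF ud uf_Int[OF ud Wd B(2)]] by blast
    then obtain e where e: "e \<in> Ws \<inter> HR (B n) \<inter> (TT - G n)" using uf_ne[OF ud] by blast
    then obtain m v where mv: "e = hat (x m) v" "v \<in> W m" unfolding Ws_def by blast
    from e obtain u' v' where uv': "u' \<in> TT" "v' \<in> B n" "e = hat u' v'" unfolding HR_def by blast
    have vT: "v \<in> TT" using WT mv(2) by blast
    have "v = v'" using hat_inj_TT[OF xT vT uv'(1) _] uv' mv B(1) by blast
    have "\<not> m < n"
    proof
      assume "m < n"
      then have "e \<in> G n" unfolding G_def using mv(1) vT by blast
      then show False using e by blast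
    qed
    then have "n \<in> {..m}" by simp
    then have "v \<notin> B n" using mv(2) unfolding W_def by blast
    then show False using \<open>v = v'\<close> uv'(2) by simp
  qed
  have op: "openin (subtopology betaT_top K) (K \<inter> bas Ws)"
    by (rule openin_subtopology_Int2[OF open_bas[OF WsT]])
  have "\<tau> \<in> (subtopology betaT_top K) closure_of C" using C(3) tK by simp
  then obtain y where y: "y \<in> C" "y \<in> K \<inter> bas Ws"
    using op tbas unfolding in_closure_of by blast
  then obtain n where "y = d n" using rd by (metis rangeE)
  then have "Ws \<in> d n" using y unfolding bas_def by blast
  then show False using notin by blast
qed

end
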